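(* Let $\mathfrak{G}$ be a groupoid of germs of a pseudogroup $\widetilde{\mathfrak{G}}$ acting on a metric space $\mathfrak{G}^{(0)}$. Let $C\subset\mathfrak{G}$ be a compact set and let $\mathcal{U}\subset\widetilde{\mathfrak{G}}$ be a covering of $C$ (each $U\in\mathcal{U}$ viewed as the open set of its germs). Then there exists $\epsilon>0$ such that for every $g\in C$ there exists $U\in\mathcal{U}$ such that $g$ is $\epsilon$-contained in $U$.
   Context: A pseudogroup $\widetilde{\mathfrak{G}}$ on a space $\mathfrak{G}^{(0)}$ is a set of homeomorphisms between open subsets, containing the identity, closed under composition, inverses, restriction to open subsets and unions. A germ is an equivalence class of pairs $(F,x)$, $F\in\widetilde{\mathfrak{G}}$, $x\in\mathrm{Dom}(F)$, where $(F_1,x)=(F_2,x)$ if $F_1,F_2$ agree near $x$; the set $\mathfrak{G}$ of germs is a groupoid with origin $\mathsf{o}(F,x)=x$, target $\mathsf{t}(F,x)=F(x)$, and topology with basis the sets $\{(F,x):x\in\mathrm{Dom}(F)\}$. Each $U\in\widetilde{\mathfrak{G}}$ is identified with the set of its germs; $\mathsf{o}(U)$ denotes its domain. For $U\in\widetilde{\mathfrak{G}}$ and $g\in\mathfrak{G}$, $g$ is $\epsilon$-contained in $U$ if the $\epsilon$-neighborhood of $\mathsf{o}(g)$ is contained in $\mathsf{o}(U)$. *)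

theory Defs
  imports "HOL-Analysis.Analysis"
begin

text \<open>An element of a pseudogroup: a homeomorphism between open subsets of the space,
  represented as a pair (domain, map). Only the values of the map on its domain matter.\<close>
type_synonym 'a pelem = "'a set \<times> ('a \<Rightarrow> 'a)"

definition partial_homeo :: "'a::topological_space pelem \<Rightarrow> bool" where
  "partial_homeo U \<longleftrightarrow> open (fst U) \<and> open (snd U ` fst U) \<and>
     (\<exists>G. homeomorphism (fst U) (snd U ` fst U) (snd U) G)"

definition pseudogroup :: "'a::topological_space pelem set \<Rightarrow> bool" where
  "pseudogroup P \<longleftrightarrow>
     (\<forall>U\<in>P. partial_homeo U)
   \<and> (UNIV, id) \<in> P
   \<and> (\<forall>U\<in>P. \<forall>V\<in>P. ({x \<in> fst V. snd V x \<in> fst U}, snd U \<circ> snd V) \<in> P)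
   \<and> (\<forall>U\<in>P. (snd U ` fst U, inv_into (fst U) (snd U)) \<in> P)
   \<and> (\<forall>U\<in>P. \<forall>W. open W \<and> W \<subseteq> fst U \<longrightarrow> (W, snd U) \<in> P)
   \<and> (\<forall>S\<subseteq>P. \<forall>F. partial_homeo (\<Union>(fst ` S), F) \<and>
          (\<forall>V\<in>S. \<forall>x\<in>fst V. F x = snd V x) \<longrightarrow> (\<Union>(fst ` S), F) \<in> P)"

definition agree_near :: "'a::topological_space pelem \<Rightarrow> 'a pelem \<Rightarrow> 'a \<Rightarrow> bool" where
  "agree_near U V x \<longleftrightarrow> (\<exists>W. open W \<and> x \<in> W \<and> W \<subseteq> fst U \<and> W \<subseteq> fst V \<and>
       (\<forall>y\<in>W. snd U y = snd V y))"

type_synonym 'a germ = "'a \<times> 'a pelem set"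

definition germ :: "'a::topological_space pelem set \<Rightarrow> 'a pelem \<Rightarrow> 'a \<Rightarrow> 'a germ" where
  "germ P U x = (x, {V \<in> P. agree_near U V x})"

definition origin :: "'a germ \<Rightarrow> 'a" where
  "origin g = fst g"

definition germs_of :: "'a::topological_space pelem set \<Rightarrow> 'a pelem \<Rightarrow> 'a germ set" where
  "germs_of P U = {germ P U x | x. x \<in> fst U}"

definition germ_groupoid :: "'a::topological_space pelem set \<Rightarrow> 'a germ set" where
  "germ_groupoid P = (\<Union>U\<in>P. germs_of P U)"

definition germ_topology :: "'a::topological_space pelem set \<Rightarrow> 'a germ topology" where
  "germ_topology P = topology_generated_by (germs_of P ` P)"

definition eps_contained ::
  "'a::metric_space pelem set \<Rightarrow> real \<Rightarrow> 'a germ \<Rightarrow> 'a pelem \<Rightarrow> bool" where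
  "eps_contained P \<epsilon> g U \<longleftrightarrow> g \<in> germs_of P U \<and> ball (origin g) \<epsilon> \<subseteq> fst U"

end

theory Submission
  imports Defs
begin

lemma germ_restrict:
  assumes "open B" "B \<subseteq> fst U" "x \<in> B"
  shows "germ P (B, snd U) x = germ P U x"
proof -
  have "agree_near (B, snd U) V x \<longleftrightarrow> agree_near U V x" for V
  proof
    assume "agree_near (B, snd U) V x"
    then show "agree_near U V x" unfolding agree_near_def using assms by auto
  next
    assume "agree_near U V x"
    then obtain W where W: "open W" "x \<in> W" "W \<subseteq> fst U" "W \<subseteq> fst V" "\<forall>y\<in>W. snd U y = snd V y"
      unfolding agree_near_def by blast
    show "agree_near (B, snd U) V x" unfolding agree_near_def
      by (rule exI[of _ "W \<inter> B"]) (use W assms in auto)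
  qed
  then show ?thesis unfolding germ_def by simp
qed

theorem lemma2p1p4:
  fixes P :: "('a::metric_space) pelem set"
    and C :: "'a germ set"
    and \<U> :: "'a pelem set"
  assumes "pseudogroup P"
    and "compactin (germ_topology P) C"
    and "\<U> \<subseteq> P"
    and "C \<subseteq> (\<Union>U\<in>\<U>. germs_of P U)"
  shows "\<exists>\<epsilon>>0. \<forall>g\<in>C. \<exists>U\<in>\<U>. eps_contained P \<epsilon> g U"
proof -
  have ex: "\<exists>U r. U \<in> \<U> \<and> r > 0 \<and> ball (fst g) (2 * r) \<subseteq> fst U \<and> fst g \<in> fst U
              \<and> germ P U (fst g) = g" if gC0: "g \<in> C" for g
  proof -
    obtain U x where U: "U \<in> \<U>" "x \<in> fst U" "g = germ P U x"
      using assms(4) gC0 unfolding germs_of_def by blast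
    have "\<forall>U\<in>P. partial_homeo U" using assms(1) unfolding pseudogroup_def by simp
    then have "partial_homeo U" using assms(3) U(1) by blast
    then have "open (fst U)" unfolding partial_homeo_def by blast
    then obtain e where e: "e > 0" "ball x e \<subseteq> fst U" using U(2) open_contains_ball by blast
    have fx: "fst g = x" using U(3) by (simp add: germ_def)
    show ?thesis
      by (rule exI[of _ U], rule exI[of _ "e/2"]) (use U e fx in auto)
  qed
  have "\<forall>g\<in>C. \<exists>p. fst p \<in> \<U> \<and> snd p > 0 \<and> ball (fst g) (2 * snd p) \<subseteq> fst (fst p) \<and> fst g \<in> fst (fst p)
              \<and> germ P (fst p) (fst g) = g"
  proof
    fix g assume g: "g \<in> C"
    obtain U r where Ur: "U \<in> \<U> \<and> r > 0 \<and> ball (fst g) (2 * r) \<subseteq> fst U \<and> fst g \<in> fst U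
              \<and> germ P U (fst g) = g" using ex[OF g] by blast
    show "\<exists>p. fst p \<in> \<U> \<and> snd p > 0 \<and> ball (fst g) (2 * snd p) \<subseteq> fst (fst p) \<and> fst g \<in> fst (fst p)
              \<and> germ P (fst p) (fst g) = g"
      by (rule exI[of _ "(U,r)"]) (simp only: fst_conv snd_conv Ur)
  qed
  from bchoice[OF this] obtain pf where pf: "\<forall>g\<in>C. fst (pf g) \<in> \<U> \<and> snd (pf g) > 0 \<and> ball (fst g) (2 * snd (pf g)) \<subseteq> fst (fst (pf g)) \<and> fst g \<in> fst (fst (pf g))
              \<and> germ P (fst (pf g)) (fst g) = g"
    by blast
  define Uf where "Uf g = fst (pf g)" for g
  define rf where "rf g = snd (pf g)" for g
  have UR: "\<And>g. g \<in> C \<Longrightarrow> Uf g \<in> \<U> \<and> rf g > 0 \<and>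
      ball (fst g) (2 * rf g) \<subseteq> fst (Uf g) \<and> fst g \<in> fst (Uf g) \<and> germ P (Uf g) (fst g) = g"
    using pf unfolding Uf_def rf_def by blast
  define W where "W g = germs_of P (ball (fst g) (rf g), snd (Uf g))" for g
  have WP: "(ball (fst g) (rf g), snd (Uf g)) \<in> P" if "g \<in> C" for g
  proof -
    have "Uf g \<in> P" using UR[OF that] assms(3) by blast
    moreover have "ball (fst g) (rf g) \<subseteq> fst (Uf g)"
      using UR[OF that] subset_ball[of "rf g" "2*rf g" "fst g"] by auto
    moreover have "\<forall>U\<in>P. \<forall>W. open W \<and> W \<subseteq> fst U \<longrightarrow> (W, snd U) \<in> P"
      using assms(1) unfolding pseudogroup_def by simp
    ultimately show ?thesis by blast
  qed
  have Wopen: "openin (germ_topology P) (W g)" if "g \<in> C" for g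
    unfolding germ_topology_def W_def
    by (rule topology_generated_by_Basis) (use WP[OF that] in blast)
  have gW: "g \<in> W g" if "g \<in> C" for g
  proof -
    have sub: "ball (fst g) (rf g) \<subseteq> fst (Uf g)"
      using UR[OF that] subset_ball[of "rf g" "2*rf g" "fst g"] by auto
    have "germ P (ball (fst g) (rf g), snd (Uf g)) (fst g) = germ P (Uf g) (fst g)"
      by (rule germ_restrict) (use sub UR[OF that] in auto)
    then have "g = germ P (ball (fst g) (rf g), snd (Uf g)) (fst g)" using UR[OF that] by simp
    moreover have "fst g \<in> ball (fst g) (rf g)" using UR[OF that] by simp
    ultimately show ?thesis unfolding W_def germs_of_def by (metis (mono_tags, lifting) fst_conv mem_Collect_eq)
  qed
  have "C \<subseteq> \<Union>(W ` C)" using gW by blast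
  then obtain F where F: "finite F" "F \<subseteq> W ` C" "C \<subseteq> \<Union>F"
  proof -
    have "\<forall>U\<in>W ` C. openin (germ_topology P) U" using Wopen by blast
    then show ?thesis using that assms(2) \<open>C \<subseteq> \<Union>(W ` C)\<close> unfolding compactin_def by blast
  qed
  then obtain G where G: "G \<subseteq> C" "finite G" "F = W ` G"
    by (meson finite_subset_image)
  show ?thesis
  proof (cases "G = {}")
    case True
    then have "C = {}" using F G by auto
    then show ?thesis by (intro exI[of _ 1]) auto
  next
    case False
    define \<epsilon> where "\<epsilon> = Min (rf ` G)"
    have epos: "\<epsilon> > 0" unfolding \<epsilon>_def using G False UR by auto
    have "\<exists>U\<in>\<U>. eps_contained P \<epsilon> h U" if h: "h \<in> C" for h
    proof -
      obtain g where g: "g \<in> G" "h \<in> W g" using F G h by auto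
      have gC: "g \<in> C" using g G by blast
      note R = UR[OF gC]
      obtain y where y: "y \<in> ball (fst g) (rf g)"
        "h = germ P (ball (fst g) (rf g), snd (Uf g)) y"
        using g(2) unfolding W_def germs_of_def by auto
      have sub: "ball (fst g) (rf g) \<subseteq> fst (Uf g)"
        using R subset_ball[of "rf g" "2*rf g" "fst g"] by auto
      have hy: "h = germ P (Uf g) y" using germ_restrict[OF _ sub y(1)] y(2) by simp
      have oy: "origin h = y" using y(2) by (simp add: germ_def origin_def)
      have "\<epsilon> \<le> rf g" unfolding \<epsilon>_def using G g by auto
      have "ball y \<epsilon> \<subseteq> ball (fst g) (2 * rf g)"
      proof
        fix z assume "z \<in> ball y \<epsilon>"
        then have "dist y z < \<epsilon>" by simp
        moreover have "dist (fst g) y < rf g" using y(1) by simp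
        moreover have "dist (fst g) z \<le> dist (fst g) y + dist y z" by (rule dist_triangle)
        ultimately show "z \<in> ball (fst g) (2 * rf g)" using \<open>\<epsilon> \<le> rf g\<close> by simp
      qed
      then have "ball y \<epsilon> \<subseteq> fst (Uf g)" using R by blast
      moreover have "h \<in> germs_of P (Uf g)"
        unfolding germs_of_def using hy y(1) sub by blast
      ultimately show ?thesis unfolding eps_contained_def using R oy by auto
    qed
    then show ?thesis using epos by blast
  qed
qed

end
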